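(* Let $\widehat\Psi\in\mathcal P_c(Y)$. There exists an increasing continuous function $R:[0,+\infty)\to[0,+\infty)$ such that for every $T\ge0$, every $k$ and every $t\in[0,T]$, $\Psi^k(t),\ \underline\Psi^k(t),\ \widetilde\Psi^k(t)\in\mathcal P(B^Y_{R(T)})$, where these are the curves of the Markov alternate scheme started at $\widehat\Psi$.
   Context: Markov setting. Fix $n\ge2$, $d\ge1$. $\Lambda_n:=\{\lambda\in\mathbb R^n:\lambda_h>0,\ \sum_h\lambda_h=1\}$, $\overline\Lambda_n$ its closure, identified with $\mathcal P(U)$ for $U:=\{e_1,\dots,e_n\}\subset\mathbb R^n$. $Y:=\mathbb R^d\times\overline\Lambda_n$ with norm $\|(x,\lambda)\|:=|x|+\|\lambda\|_{\mathrm{BL}}$, $\|\mu\|_{\mathrm{BL}}:=\sup\{\sum_h\mu_h\varphi(e_h):\|\varphi\|_\infty+\mathrm{Lip}(\varphi)\le1\}$; $B_R:=\{|x|\le R\}\subset\mathbb R^d$, $B^Y_R:=\{y\in Y:\|y\|\le R\}$. $\mathcal P_1(Y)$, $\mathcal P_c(Y)$, $\mathcal P(K)$: probability measures with finite first moment, compact support, support in $K$; $W_1$ the Kantorovich–Rubinstein distance for $\|\cdot\|$; $m_1(\Psi):=\int\|y\|d\Psi$. A map $\mathcal Q:\mathbb R^d\times\mathcal P_1(Y)\to\mathbb R^{n\times n}$ satisfies (Q0) $\mathcal Q_{h\ell}\ge0$ for $h\ne\ell$, $\mathcal Q_{hh}=-\sum_{\ell\ne h}\mathcal Q_{\ell h}$;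 (Q1) there is a unique $\sigma(x,\Psi)\in\Lambda_n$ with $\mathcal Q_{h\ell}\sigma_\ell=\mathcal Q_{\ell h}\sigma_h$; (Q2) $|\mathcal Q(x_1,\Psi_1)-\mathcal Q(x_2,\Psi_2)|\le L_{\mathcal Q,R}(|x_1-x_2|+W_1(\Psi_1,\Psi_2))$ for $x_i\in B_R$, $\Psi_i\in\mathcal P(B^Y_R)$; (Q3) $|\mathcal Q(x,\Psi)|\le M_{\mathcal Q}(1+|x|+m_1(\Psi))$. Velocity fields $v_\Psi:Y\to\mathbb R^d$ satisfy (v1) $|v_\Psi(y_1)-v_\Psi(y_2)|\le L_{v,R}\|y_1-y_2\|$ for $y_i\in B^Y_R$, $\Psi\in\mathcal P(B^Y_R)$; (v2) $|v_{\Psi_1}(y)-v_{\Psi_2}(y)|\le L_{v,R}W_1(\Psi_1,\Psi_2)$ for $\Psi_i\in\mathcal P(B^Y_R)$, $y\in B^Y_R$; (v3) $|v_\Psi(y)|\le M_v(1+\|y\|+m_1(\Psi))$. $E(x,\lambda,\Psi):=\sum_h\lambda_h\ln(\lambda_h/\sigma_h(x,\Psi))$; $\Phi(a,b):=\frac{a-b}{\ln a-\ln b}$, $\Phi(a,a):=a$; $K(x,\lambda,\Psi):=\sum_{\ell=2}^n\sum_{h<\ell}\mathcal Q_{h\ell}\sigma_\ell\Phi(\lambda_h/\sigma_h,\lambda_\ell/\sigma_\ell)(e_h-e_\ell)\otimes(e_h-e_\ell)$; $G$ its inverse on $\mathbb R^n_0:=\{\sum\xi_h=0\}$; $\mathsf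 d_{(x,\Psi)}(\lambda_1,\lambda_2):=\inf\{\int_0^1\langle G(x,\rho,\Psi)\rho',\rho'\rangle^{1/2}ds:\rho\in C^1([0,1];\Lambda_n),\rho(0)=\lambda_1,\rho(1)=\lambda_2\}$; $E$ and $\mathsf d$ are extended continuously to $\overline\Lambda_n$. Markov alternate scheme. Let $\tau_k>0$, $\tau_k\to0$, $t^k_i:=i\tau_k$ ($i\in\mathbb N$), $\Psi^k_0:=\widehat\Psi$. Given $\Psi^k_i$, for $(x,\lambda)\in Y$ let $\lambda^{\mathrm{new}}(x,\lambda)$ be a minimizer (measurably selected) of $\rho\mapsto E(x,\rho,\Psi^k_i)+\frac1{2\tau_k}\mathsf d^2_{(x,\Psi^k_i)}(\rho,\lambda)$ over $\overline\Lambda_n$; for $t\in[t^k_i,t^k_{i+1}]$: $\Lambda^k_{i+1}(t,x,\lambda):=\lambda+\frac{t-t^k_i}{\tau_k}(\lambda^{\mathrm{new}}(x,\lambda)-\lambda)$; $\widetilde\Psi^k_{i+1}:=$ push-forward of $\Psi^k_i$ under $(x,\lambda)\mapsto(x,\Lambda^k_{i+1}(t^k_{i+1},x,\lambda))$; $X^k_{i+1}(t,x,\lambda):=x+(t-t^k_i)v_{\widetilde\Psi^k_{i+1}}(x,\Lambda^k_{i+1}(t^k_{i+1},x,\lambda))$; $\Psi^k(t):=(X^k_{i+1}(t,\cdot),\Lambda^k_{i+1}(t,\cdot))_\#\Psi^k_i$, $\Psi^k_{i+1}:=\Psi^k(t^k_{i+1})$; $\widetilde\Psi^k(t):=\widetilde\Psi^k_{i+1}$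 on $(t^k_i,t^k_{i+1}]$, $\underline\Psi^k(t):=\Psi^k_i$ on $[t^k_i,t^k_{i+1})$. *)

theory Defs
  imports "HOL-Analysis.Analysis" "HOL-Probability.Probability"
begin

text \<open>Indices h of the simplex range over a finite linearly ordered type 'n (n = CARD('n));
  e_h is axis h 1. The matrix entry Q_{h l} is (Q $ h $ l). Space R^d is real^('d::finite).\<close>

definition open_simplex :: "(real^'n::{finite,linorder}) set" where
  "open_simplex = {l. (\<forall>h. l $ h > 0) \<and> (\<Sum>h\<in>UNIV. l $ h) = 1}"

definition closed_simplex :: "(real^'n::{finite,linorder}) set" where
  "closed_simplex = {l. (\<forall>h. l $ h \<ge> 0) \<and> (\<Sum>h\<in>UNIV. l $ h) = 1}"

definition Uset :: "(real^'n::{finite,linorder}) set" where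
  "Uset = range (\<lambda>h. axis h 1)"

definition sup_U :: "(real^'n::{finite,linorder} \<Rightarrow> real) \<Rightarrow> real" where
  "sup_U \<phi> = Sup {\<bar>\<phi> u\<bar> | u. u \<in> Uset}"

definition lip_U :: "(real^'n::{finite,linorder} \<Rightarrow> real) \<Rightarrow> real" where
  "lip_U \<phi> = Sup {\<bar>\<phi> u - \<phi> w\<bar> / dist u w | u w. u \<in> Uset \<and> w \<in> Uset \<and> u \<noteq> w}"

text \<open>Bounded-Lipschitz norm of a (signed) measure mu on U, identified with a vector of R^n.\<close>
definition bl_norm :: "real^'n::{finite,linorder} \<Rightarrow> real" where
  "bl_norm \<mu> = Sup {(\<Sum>h\<in>UNIV. \<mu> $ h * \<phi> (axis h 1)) | \<phi>. sup_U \<phi> + lip_U \<phi> \<le> 1}"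

definition Yset :: "((real^'d::finite) \<times> (real^'n::{finite,linorder})) set" where
  "Yset = UNIV \<times> closed_simplex"

text \<open>The norm of Y, extended to the ambient vector space R^d x R^n (a norm there as well).\<close>
definition ynorm :: "(real^'d::finite) \<times> (real^'n::{finite,linorder}) \<Rightarrow> real" where
  "ynorm y = norm (fst y) + bl_norm (snd y)"

definition BY :: "real \<Rightarrow> ((real^'d::finite) \<times> (real^'n::{finite,linorder})) set" where
  "BY R = {y \<in> Yset. ynorm y \<le> R}"

type_synonym ('d,'n) ymeasure = "((real^'d) \<times> (real^'n)) measure"

definition PK :: "((real^'d::finite) \<times> (real^'n::{finite,linorder})) set \<Rightarrow> ('d::finite,'n::{finite,linorder}) ymeasure \<Rightarrow> bool" where
  "PK K M \<longleftrightarrow> prob_space M \<and> sets M = sets borel \<and> (AE y in M. y \<in> K)"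

definition P1Y :: "('d::finite,'n::{finite,linorder}) ymeasure \<Rightarrow> bool" where
  "P1Y M \<longleftrightarrow> PK Yset M \<and> integrable M ynorm"

definition PcY :: "('d::finite,'n::{finite,linorder}) ymeasure \<Rightarrow> bool" where
  "PcY M \<longleftrightarrow> (\<exists>K. compact K \<and> K \<subseteq> Yset \<and> PK K M)"

definition m1 :: "('d::finite,'n::{finite,linorder}) ymeasure \<Rightarrow> real" where
  "m1 M = (\<integral>y. ynorm y \<partial>M)"

definition W1 :: "('d::finite,'n::{finite,linorder}) ymeasure \<Rightarrow> ('d::finite,'n::{finite,linorder}) ymeasure \<Rightarrow> real" where
  "W1 M N = Sup {(\<integral>y. f y \<partial>M) - (\<integral>y. f y \<partial>N) | f. \<forall>a b. \<bar>f a - f b\<bar> \<le> ynorm (a - b)}"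

definition detailed_balance :: "real^('n::{finite,linorder})^('n::{finite,linorder}) \<Rightarrow> real^('n::{finite,linorder}) \<Rightarrow> bool" where
  "detailed_balance A s \<longleftrightarrow> (\<forall>h l. A $ h $ l * s $ l = A $ l $ h * s $ h)"

definition Q_assms :: "(real^'d::finite \<Rightarrow> ('d,'n::{finite,linorder}) ymeasure \<Rightarrow> real^('n::{finite,linorder})^('n::{finite,linorder})) \<Rightarrow> bool" where
  "Q_assms Q \<longleftrightarrow>
     \<comment> \<open>(Q0)\<close>
     (\<forall>x \<Psi>. P1Y \<Psi> \<longrightarrow> (\<forall>h l. h \<noteq> l \<longrightarrow> Q x \<Psi> $ h $ l \<ge> 0) \<and>
        (\<forall>h. Q x \<Psi> $ h $ h = - (\<Sum>l\<in>UNIV - {h}. Q x \<Psi> $ l $ h))) \<and>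
     \<comment> \<open>(Q1)\<close>
     (\<forall>x \<Psi>. P1Y \<Psi> \<longrightarrow> (\<exists>!s. s \<in> open_simplex \<and> detailed_balance (Q x \<Psi>) s)) \<and>
     \<comment> \<open>(Q2)\<close>
     (\<exists>L. \<forall>R x1 x2 \<Psi>1 \<Psi>2. x1 \<in> cball 0 R \<longrightarrow> x2 \<in> cball 0 R \<longrightarrow> PK (BY R) \<Psi>1 \<longrightarrow> PK (BY R) \<Psi>2 \<longrightarrow>
        norm (Q x1 \<Psi>1 - Q x2 \<Psi>2) \<le> L R * (dist x1 x2 + W1 \<Psi>1 \<Psi>2)) \<and>
     \<comment> \<open>(Q3)\<close>
     (\<exists>M. \<forall>x \<Psi>. P1Y \<Psi> \<longrightarrow> norm (Q x \<Psi>) \<le> M * (1 + norm x + m1 \<Psi>))"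

definition v_assms :: "(('d::finite,'n::{finite,linorder}) ymeasure \<Rightarrow> (real^('d::finite)) \<times> (real^('n::{finite,linorder})) \<Rightarrow> real^('d::finite)) \<Rightarrow> bool" where
  "v_assms v \<longleftrightarrow>
     (\<exists>L. \<comment> \<open>(v1)\<close>
        (\<forall>R \<Psi> y1 y2. PK (BY R) \<Psi> \<longrightarrow> y1 \<in> BY R \<longrightarrow> y2 \<in> BY R \<longrightarrow>
           norm (v \<Psi> y1 - v \<Psi> y2) \<le> L R * ynorm (y1 - y2)) \<and>
        \<comment> \<open>(v2)\<close>
        (\<forall>R \<Psi>1 \<Psi>2 y. PK (BY R) \<Psi>1 \<longrightarrow> PK (BY R) \<Psi>2 \<longrightarrow> y \<in> BY R \<longrightarrow>
           norm (v \<Psi>1 y - v \<Psi>2 y) \<le> L R * W1 \<Psi>1 \<Psi>2)) \<and>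
     \<comment> \<open>(v3)\<close>
     (\<exists>M. \<forall>\<Psi> y. P1Y \<Psi> \<longrightarrow> y \<in> Yset \<longrightarrow> norm (v \<Psi> y) \<le> M * (1 + ynorm y + m1 \<Psi>))"

definition sigma :: "(real^'d::finite \<Rightarrow> ('d,'n::{finite,linorder}) ymeasure \<Rightarrow> real^('n::{finite,linorder})^('n::{finite,linorder}))
    \<Rightarrow> real^('d::finite) \<Rightarrow> ('d::finite,'n::{finite,linorder}) ymeasure \<Rightarrow> real^('n::{finite,linorder})" where
  "sigma Q x \<Psi> = (THE s. s \<in> open_simplex \<and> detailed_balance (Q x \<Psi>) s)"

text \<open>Relative entropy, with the continuous extension 0 ln 0 = 0 to the closed simplex.\<close>
definition Ent :: "(real^'d::finite \<Rightarrow> ('d,'n::{finite,linorder}) ymeasure \<Rightarrow> real^('n::{finite,linorder})^('n::{finite,linorder}))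
    \<Rightarrow> real^('d::finite) \<Rightarrow> real^('n::{finite,linorder}) \<Rightarrow> ('d::finite,'n::{finite,linorder}) ymeasure \<Rightarrow> real" where
  "Ent Q x l \<Psi> = (\<Sum>h\<in>UNIV. if l $ h = 0 then 0 else l $ h * ln (l $ h / sigma Q x \<Psi> $ h))"

definition logmean :: "real \<Rightarrow> real \<Rightarrow> real" where
  "logmean a b = (if a = b then a else (a - b) / (ln a - ln b))"

definition outer :: "real^'n::{finite,linorder} \<Rightarrow> real^('n::{finite,linorder})^('n::{finite,linorder})" where
  "outer a = (\<chi> i j. a $ i * a $ j)"

definition Kmat :: "(real^'d::finite \<Rightarrow> ('d,'n::{finite,linorder}) ymeasure \<Rightarrow> real^('n::{finite,linorder})^('n::{finite,linorder}))
    \<Rightarrow> real^('d::finite) \<Rightarrow> real^('n::{finite,linorder}) \<Rightarrow> ('d::finite,'n::{finite,linorder}) ymeasure \<Rightarrow> real^('n::{finite,linorder})^('n::{finite,linorder})" where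
  "Kmat Q x l \<Psi> = (\<Sum>ll\<in>UNIV. \<Sum>h\<in>{h. h < ll}.
      (Q x \<Psi> $ h $ ll * sigma Q x \<Psi> $ ll
        * logmean (l $ h / sigma Q x \<Psi> $ h) (l $ ll / sigma Q x \<Psi> $ ll))
      *\<^sub>R outer (axis h 1 - axis ll 1))"

definition Gop :: "(real^'d::finite \<Rightarrow> ('d,'n::{finite,linorder}) ymeasure \<Rightarrow> real^('n::{finite,linorder})^('n::{finite,linorder}))
    \<Rightarrow> real^('d::finite) \<Rightarrow> real^('n::{finite,linorder}) \<Rightarrow> ('d::finite,'n::{finite,linorder}) ymeasure \<Rightarrow> real^('n::{finite,linorder}) \<Rightarrow> real^('n::{finite,linorder})" where
  "Gop Q x l \<Psi> \<xi> = (THE \<eta>. (\<Sum>h\<in>UNIV. \<eta> $ h) = 0 \<and> Kmat Q x l \<Psi> *v \<eta> = \<xi>)"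

definition dist0 :: "(real^'d::finite \<Rightarrow> ('d,'n::{finite,linorder}) ymeasure \<Rightarrow> real^('n::{finite,linorder})^('n::{finite,linorder}))
    \<Rightarrow> real^('d::finite) \<Rightarrow> ('d::finite,'n::{finite,linorder}) ymeasure \<Rightarrow> real^('n::{finite,linorder}) \<Rightarrow> real^('n::{finite,linorder}) \<Rightarrow> real" where
  "dist0 Q x \<Psi> l1 l2 = Inf {integral {0..1} (\<lambda>s. sqrt (Gop Q x (\<rho> s) \<Psi> (D s) \<bullet> D s)) | \<rho> D.
      (\<forall>s\<in>{0..1}. (\<rho> has_vector_derivative D s) (at s within {0..1})) \<and> continuous_on {0..1} D \<and>
      (\<forall>s\<in>{0..1}. \<rho> s \<in> open_simplex) \<and> \<rho> 0 = l1 \<and> \<rho> 1 = l2}"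

definition dist_Q :: "(real^'d::finite \<Rightarrow> ('d,'n::{finite,linorder}) ymeasure \<Rightarrow> real^('n::{finite,linorder})^('n::{finite,linorder}))
    \<Rightarrow> real^('d::finite) \<Rightarrow> ('d::finite,'n::{finite,linorder}) ymeasure \<Rightarrow> real^('n::{finite,linorder}) \<Rightarrow> real^('n::{finite,linorder}) \<Rightarrow> real" where
  "dist_Q Q x \<Psi> l1 l2 =
     Lim (at (l1, l2) within (open_simplex \<times> open_simplex)) (\<lambda>(a, b). dist0 Q x \<Psi> a b)"

text \<open>s is the (measurably selected) minimiser map lambda_new; the maps are written with a
  harmless "if y in Y" guard (all measures are concentrated on Y).\<close>
definition tilde_step :: "((real^'d::finite) \<times> (real^'n::{finite,linorder}) \<Rightarrow> real^('n::{finite,linorder}))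
    \<Rightarrow> ('d::finite,'n::{finite,linorder}) ymeasure \<Rightarrow> ('d::finite,'n::{finite,linorder}) ymeasure" where
  "tilde_step s P = distr P borel (\<lambda>y. if y \<in> Yset then (fst y, s y) else y)"

text \<open>Value at time t = t_i + r of the curve started from P (on [t_i, t_{i+1}]).\<close>
definition flow_step :: "(('d::finite,'n::{finite,linorder}) ymeasure \<Rightarrow> (real^('d::finite)) \<times> (real^('n::{finite,linorder})) \<Rightarrow> real^('d::finite))
    \<Rightarrow> real \<Rightarrow> ((real^('d::finite)) \<times> (real^('n::{finite,linorder})) \<Rightarrow> real^('n::{finite,linorder})) \<Rightarrow> ('d::finite,'n::{finite,linorder}) ymeasure \<Rightarrow> real \<Rightarrow> ('d::finite,'n::{finite,linorder}) ymeasure" where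
  "flow_step v \<tau> s P r = distr P borel (\<lambda>y. if y \<in> Yset then
      (fst y + r *\<^sub>R v (tilde_step s P) (fst y, s y), snd y + (r / \<tau>) *\<^sub>R (s y - snd y)) else y)"

primrec node :: "(('d::finite,'n::{finite,linorder}) ymeasure \<Rightarrow> (real^('d::finite)) \<times> (real^('n::{finite,linorder})) \<Rightarrow> real^('d::finite))
    \<Rightarrow> real \<Rightarrow> (nat \<Rightarrow> (real^('d::finite)) \<times> (real^('n::{finite,linorder})) \<Rightarrow> real^('n::{finite,linorder})) \<Rightarrow> ('d::finite,'n::{finite,linorder}) ymeasure \<Rightarrow> nat \<Rightarrow> ('d::finite,'n::{finite,linorder}) ymeasure" where
  "node v \<tau> s P0 0 = P0"
| "node v \<tau> s P0 (Suc i) = flow_step v \<tau> (s i) (node v \<tau> s P0 i) \<tau>"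

definition scheme_selection :: "(real^'d::finite \<Rightarrow> ('d,'n::{finite,linorder}) ymeasure \<Rightarrow> real^('n::{finite,linorder})^('n::{finite,linorder}))
    \<Rightarrow> (('d::finite,'n::{finite,linorder}) ymeasure \<Rightarrow> (real^('d::finite)) \<times> (real^('n::{finite,linorder})) \<Rightarrow> real^('d::finite))
    \<Rightarrow> real \<Rightarrow> ('d::finite,'n::{finite,linorder}) ymeasure \<Rightarrow> (nat \<Rightarrow> (real^('d::finite)) \<times> (real^('n::{finite,linorder})) \<Rightarrow> real^('n::{finite,linorder})) \<Rightarrow> bool" where
  "scheme_selection Q v \<tau> P0 s \<longleftrightarrow> (\<forall>i.
     s i \<in> borel_measurable borel \<and>
     (\<forall>x l. (x, l) \<in> Yset \<longrightarrow>
        s i (x, l) \<in> closed_simplex \<and>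
        (\<forall>\<rho>\<in>closed_simplex.
           Ent Q x (s i (x, l)) (node v \<tau> s P0 i) + (dist_Q Q x (node v \<tau> s P0 i) (s i (x, l)) l)\<^sup>2 / (2 * \<tau>)
           \<le> Ent Q x \<rho> (node v \<tau> s P0 i) + (dist_Q Q x (node v \<tau> s P0 i) \<rho> l)\<^sup>2 / (2 * \<tau>))))"

definition curve :: "(('d::finite,'n::{finite,linorder}) ymeasure \<Rightarrow> (real^('d::finite)) \<times> (real^('n::{finite,linorder})) \<Rightarrow> real^('d::finite))
    \<Rightarrow> real \<Rightarrow> (nat \<Rightarrow> (real^('d::finite)) \<times> (real^('n::{finite,linorder})) \<Rightarrow> real^('n::{finite,linorder})) \<Rightarrow> ('d::finite,'n::{finite,linorder}) ymeasure \<Rightarrow> real \<Rightarrow> ('d::finite,'n::{finite,linorder}) ymeasure" where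
  "curve v \<tau> s P0 t = (let i = nat \<lfloor>t / \<tau>\<rfloor> in flow_step v \<tau> (s i) (node v \<tau> s P0 i) (t - real i * \<tau>))"

definition curve_under :: "(('d::finite,'n::{finite,linorder}) ymeasure \<Rightarrow> (real^('d::finite)) \<times> (real^('n::{finite,linorder})) \<Rightarrow> real^('d::finite))
    \<Rightarrow> real \<Rightarrow> (nat \<Rightarrow> (real^('d::finite)) \<times> (real^('n::{finite,linorder})) \<Rightarrow> real^('n::{finite,linorder})) \<Rightarrow> ('d::finite,'n::{finite,linorder}) ymeasure \<Rightarrow> real \<Rightarrow> ('d::finite,'n::{finite,linorder}) ymeasure" where
  "curve_under v \<tau> s P0 t = node v \<tau> s P0 (nat \<lfloor>t / \<tau>\<rfloor>)"

text \<open>On (t_i, t_{i+1}] this is tilde Psi_{i+1}; at t = 0 we use the convention tilde Psi(0) = tilde Psi_1.\<close>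
definition curve_tilde :: "(('d::finite,'n::{finite,linorder}) ymeasure \<Rightarrow> (real^('d::finite)) \<times> (real^('n::{finite,linorder})) \<Rightarrow> real^('d::finite))
    \<Rightarrow> real \<Rightarrow> (nat \<Rightarrow> (real^('d::finite)) \<times> (real^('n::{finite,linorder})) \<Rightarrow> real^('n::{finite,linorder})) \<Rightarrow> ('d::finite,'n::{finite,linorder}) ymeasure \<Rightarrow> real \<Rightarrow> ('d::finite,'n::{finite,linorder}) ymeasure" where
  "curve_tilde v \<tau> s P0 t = (let i = nat (\<lceil>t / \<tau>\<rceil> - 1) in tilde_step (s i) (node v \<tau> s P0 i))"

end

theory Submission
  imports Defs
begin


lemma Uset_finite: "finite (Uset :: (real^'n::{finite,linorder}) set)"
  unfolding Uset_def by simp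

lemma sup_U_ge:
  fixes \<phi> :: "real^'n::{finite,linorder} \<Rightarrow> real"
  assumes "u \<in> Uset" shows "\<bar>\<phi> u\<bar> \<le> sup_U \<phi>"
proof -
  have fin: "finite {\<bar>\<phi> u\<bar> | u. u \<in> Uset}"
    using Uset_finite[where 'n='n] by (simp add: setcompr_eq_image)
  show ?thesis unfolding sup_U_def
    by (rule cSup_upper) (use assms fin in \<open>auto intro: bdd_above_finite\<close>)
qed

lemma lip_U_nonneg:
  fixes \<phi> :: "real^'n::{finite,linorder} \<Rightarrow> real"
  assumes n2: "CARD('n) \<ge> 2" shows "0 \<le> lip_U \<phi>"
proof -
  obtain a b :: 'n where ab: "a \<noteq> b"
    using n2 by (metis card_2_iff' card_le_Suc_iff numeral_2_eq_2 obtain_subset_with_card_n)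
  have ne: "(axis a 1 :: real^('n::{finite,linorder})) \<noteq> axis b 1" using ab by (simp add: axis_eq_axis)
  let ?S = "{\<bar>\<phi> u - \<phi> w\<bar> / dist u w | u w. u \<in> (Uset :: (real^('n::{finite,linorder})) set) \<and> w \<in> Uset \<and> u \<noteq> w}"
  have "?S = (\<lambda>(u,w). \<bar>\<phi> u - \<phi> w\<bar> / dist u w) ` {(u,w). u \<in> Uset \<and> w \<in> Uset \<and> u \<noteq> w}"
    by auto
  moreover have "finite {(u,w). u \<in> (Uset :: (real^('n::{finite,linorder})) set) \<and> w \<in> Uset \<and> u \<noteq> w}"
    by (rule finite_subset[of _ "Uset \<times> Uset"]) (auto simp: Uset_finite)
  ultimately have fin: "finite ?S" by simp
  have mem: "\<bar>\<phi> (axis a 1) - \<phi> (axis b 1)\<bar> / dist (axis a 1 :: real^('n::{finite,linorder})) (axis b 1) \<in> ?S"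
    unfolding Uset_def by (rule CollectI, rule exI[of _ "axis a 1"], rule exI[of _ "axis b 1"]) (use ne in auto)
  have "0 \<le> \<bar>\<phi> (axis a 1) - \<phi> (axis b 1)\<bar> / dist (axis a 1 :: real^('n::{finite,linorder})) (axis b 1)" by simp
  also have "\<dots> \<le> Sup ?S" by (rule cSup_upper[OF mem]) (use fin in \<open>rule bdd_above_finite\<close>)
  finally show ?thesis unfolding lip_U_def .
qed

lemma phi_bound:
  fixes \<phi> :: "real^'n::{finite,linorder} \<Rightarrow> real"
  assumes n2: "CARD('n) \<ge> 2" and "sup_U \<phi> + lip_U \<phi> \<le> 1"
  shows "\<bar>\<phi> (axis h 1)\<bar> \<le> 1"
proof -
  have "axis h 1 \<in> (Uset :: (real^('n::{finite,linorder})) set)" unfolding Uset_def by blast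
  then have "\<bar>\<phi> (axis h 1)\<bar> \<le> sup_U \<phi>" by (rule sup_U_ge)
  with lip_U_nonneg[OF n2, of \<phi>] assms(2) show ?thesis by linarith
qed

definition blset :: "real^'n::{finite,linorder} \<Rightarrow> real set" where
  "blset \<mu> = {(\<Sum>h\<in>UNIV. \<mu> $ h * \<phi> (axis h 1)) | \<phi>. sup_U \<phi> + lip_U \<phi> \<le> 1}"

lemma bl_norm_blset: "bl_norm \<mu> = Sup (blset \<mu>)"
  unfolding bl_norm_def blset_def ..

lemma blset_le:
  fixes \<mu> :: "real^'n::{finite,linorder}"
  assumes n2: "CARD('n) \<ge> 2" and "z \<in> blset \<mu>"
  shows "z \<le> (\<Sum>h\<in>UNIV. \<bar>\<mu> $ h\<bar>)"
proof -
  obtain \<phi> where z: "z = (\<Sum>h\<in>UNIV. \<mu> $ h * \<phi> (axis h 1))" and p: "sup_U \<phi> + lip_U \<phi> \<le> 1"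
    using assms(2) unfolding blset_def by blast
  have "\<mu> $ h * \<phi> (axis h 1) \<le> \<bar>\<mu> $ h\<bar>" for h
  proof -
    have "\<mu> $ h * \<phi> (axis h 1) \<le> \<bar>\<mu> $ h\<bar> * \<bar>\<phi> (axis h 1)\<bar>"
      by (metis abs_ge_self abs_mult)
    also have "\<dots> \<le> \<bar>\<mu> $ h\<bar>" using phi_bound[OF n2 p, of h]
      by (simp add: mult_left_le)
    finally show ?thesis .
  qed
  then show ?thesis unfolding z by (rule sum_mono)
qed

lemma zero_sup_U: "sup_U (\<lambda>_::real^('n::{finite,linorder}). 0::real) = 0"
proof -
  have e: "{\<bar>(\<lambda>_. 0::real) u\<bar> | u. u \<in> (Uset :: (real^('n::{finite,linorder})) set)} = {0}"
    unfolding Uset_def by auto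
  show ?thesis unfolding sup_U_def e by simp
qed

lemma zero_lip_U: assumes n2: "CARD('n::{finite,linorder}) \<ge> 2" shows "lip_U (\<lambda>_::real^('n::{finite,linorder}). 0::real) = 0"
proof (cases "\<exists>u w. u \<in> (Uset :: (real^('n::{finite,linorder})) set) \<and> w \<in> Uset \<and> u \<noteq> w")
  case True
  then have e: "{\<bar>(\<lambda>_. 0::real) u - (\<lambda>_. 0::real) w\<bar> / dist u w | u w. u \<in> (Uset :: (real^('n::{finite,linorder})) set) \<and> w \<in> Uset \<and> u \<noteq> w} = {0}"
    by auto
  show ?thesis unfolding lip_U_def e by simp
next
  case False
  then have e: "{\<bar>(\<lambda>_. 0::real) u - (\<lambda>_. 0::real) w\<bar> / dist u w | u w. u \<in> (Uset :: (real^('n::{finite,linorder})) set) \<and> w \<in> Uset \<and> u \<noteq> w} = {}"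
    by auto
  obtain a b :: 'n where ab: "a \<noteq> b"
    using n2 by (metis card_2_iff' card_le_Suc_iff numeral_2_eq_2 obtain_subset_with_card_n)
  have ne: "(axis a 1 :: real^('n::{finite,linorder})) \<noteq> axis b 1" using ab by (simp add: axis_eq_axis)
  then show ?thesis using False unfolding Uset_def by blast
qed

lemma zero_in_blset: assumes n2: "CARD('n::{finite,linorder}) \<ge> 2" shows "0 \<in> blset (\<mu> :: real^('n::{finite,linorder}))"
proof -
  define \<phi>0 :: "real^('n::{finite,linorder}) \<Rightarrow> real" where "\<phi>0 = (\<lambda>_. 0)"
  have p: "sup_U \<phi>0 + lip_U \<phi>0 \<le> 1"
    unfolding \<phi>0_def zero_sup_U zero_lip_U[OF n2] by simp
  have "(\<Sum>h\<in>UNIV. \<mu> $ h * \<phi>0 (axis h 1)) \<in> blset \<mu>"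
    unfolding blset_def using p by blast
  then show ?thesis by (simp add: \<phi>0_def)
qed

lemma blset_bdd:
  fixes \<mu> :: "real^'n::{finite,linorder}"
  assumes n2: "CARD('n) \<ge> 2" shows "bdd_above (blset \<mu>)"
  using blset_le[OF n2] by (intro bdd_aboveI) blast

lemma bl_norm_le_sum:
  fixes \<mu> :: "real^'n::{finite,linorder}"
  assumes n2: "CARD('n) \<ge> 2" shows "bl_norm \<mu> \<le> (\<Sum>h\<in>UNIV. \<bar>\<mu> $ h\<bar>)"
  unfolding bl_norm_blset using zero_in_blset[OF n2] blset_le[OF n2]
  by (intro cSup_least) blast+

lemma bl_norm_nonneg:
  fixes \<mu> :: "real^'n::{finite,linorder}"
  assumes n2: "CARD('n) \<ge> 2" shows "0 \<le> bl_norm \<mu>"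
  unfolding bl_norm_blset using zero_in_blset[OF n2] blset_bdd[OF n2] by (rule cSup_upper)

lemma bl_norm_lip:
  fixes a b :: "real^'n::{finite,linorder}"
  assumes n2: "CARD('n) \<ge> 2" shows "bl_norm a \<le> bl_norm b + (\<Sum>h\<in>UNIV. \<bar>a $ h - b $ h\<bar>)"
proof -
  have "z \<le> bl_norm b + (\<Sum>h\<in>UNIV. \<bar>a $ h - b $ h\<bar>)" if zin: "z \<in> blset a" for z
  proof -
    obtain \<phi> :: "real^('n::{finite,linorder}) \<Rightarrow> real" where z: "z = (\<Sum>h\<in>UNIV. a $ h * \<phi> (axis h 1))" and p: "sup_U \<phi> + lip_U \<phi> \<le> 1"
      using zin unfolding blset_def by blast
    have zb: "(\<Sum>h\<in>UNIV. b $ h * \<phi> (axis h 1)) \<in> blset b" using p unfolding blset_def by blast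
    have zd: "(\<Sum>h\<in>UNIV. (a - b) $ h * \<phi> (axis h 1)) \<in> blset (a - b)" using p unfolding blset_def by blast
    have "z = (\<Sum>h\<in>UNIV. b $ h * \<phi> (axis h 1)) + (\<Sum>h\<in>UNIV. (a - b) $ h * \<phi> (axis h 1))"
      unfolding z by (simp add: sum.distrib[symmetric] algebra_simps)
    also have "\<dots> \<le> bl_norm b + (\<Sum>h\<in>UNIV. \<bar>(a - b) $ h\<bar>)"
      using cSup_upper[OF zb blset_bdd[OF n2]] blset_le[OF n2 zd] unfolding bl_norm_blset
      by linarith
    finally show ?thesis by simp
  qed
  then show ?thesis unfolding bl_norm_blset[of a] using zero_in_blset[OF n2]
    by (intro cSup_least) blast+
qed

lemma sum_abs_le_norm:
  fixes \<mu> :: "real^'m::finite"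
  shows "(\<Sum>h\<in>UNIV. \<bar>\<mu> $ h\<bar>) \<le> real CARD('m) * norm \<mu>"
proof -
  have "(\<Sum>h\<in>UNIV. \<bar>\<mu> $ h\<bar>) \<le> (\<Sum>h\<in>(UNIV::'m::finite set). norm \<mu>)"
    by (rule sum_mono) (metis component_le_norm_cart real_norm_def)
  then show ?thesis by simp
qed

lemma bl_norm_continuous:
  assumes n2: "CARD('n::{finite,linorder}) \<ge> 2"
  shows "continuous_on UNIV (bl_norm :: real^('n::{finite,linorder}) \<Rightarrow> real)"
proof (rule continuous_on_iff[THEN iffD2], intro ballI allI impI)
  fix x :: "real^('n::{finite,linorder})" and e :: real assume e: "e > 0"
  define d where "d = e / (real CARD('n) + 1)"
  have d: "d > 0" using e unfolding d_def by simp
  show "\<exists>d>0. \<forall>x'\<in>UNIV. dist x' x < d \<longrightarrow> dist (bl_norm x') (bl_norm x) < e"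
  proof (intro exI[of _ d] conjI ballI impI d)
    fix x' :: "real^('n::{finite,linorder})" assume "dist x' x < d"
    have s1: "(\<Sum>h\<in>UNIV. \<bar>x' $ h - x $ h\<bar>) \<le> real CARD('n) * norm (x' - x)"
      using sum_abs_le_norm[of "x' - x"] by simp
    have s2: "(\<Sum>h\<in>UNIV. \<bar>x $ h - x' $ h\<bar>) \<le> real CARD('n) * norm (x' - x)"
      using sum_abs_le_norm[of "x - x'"] by (simp add: norm_minus_commute)
    have "real CARD('n) * norm (x' - x) \<le> real CARD('n) * d"
      using \<open>dist x' x < d\<close> by (simp add: dist_norm)
    also have "\<dots> < e" using e unfolding d_def by (simp add: field_simps)
    finally show "dist (bl_norm x') (bl_norm x) < e"
      using bl_norm_lip[OF n2, of x' x] bl_norm_lip[OF n2, of x x'] s1 s2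
      by (simp add: dist_real_def abs_less_iff)
  qed
qed

lemma ynorm_measurable:
  assumes n2: "CARD('n::{finite,linorder}) \<ge> 2"
  shows "(ynorm :: (real^'d::finite) \<times> (real^('n::{finite,linorder})) \<Rightarrow> real) \<in> borel_measurable borel"
proof -
  have "continuous_on UNIV (ynorm :: (real^'d::finite) \<times> (real^('n::{finite,linorder})) \<Rightarrow> real)"
    unfolding ynorm_def
    by (intro continuous_intros continuous_on_compose2[OF bl_norm_continuous[OF n2]]) auto
  then show ?thesis by (rule borel_measurable_continuous_onI)
qed

lemma closed_simplex_closed: "closed (closed_simplex :: (real^'n::{finite,linorder}) set)"
proof -
  have "closed_simplex = (\<Inter>h. {l::real^('n::{finite,linorder}). l $ h \<ge> 0}) \<inter> {l. (\<Sum>h\<in>UNIV. l $ h) = 1}"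
    unfolding closed_simplex_def by auto
  moreover have "closed {l::real^('n::{finite,linorder}). (\<Sum>h\<in>UNIV. l $ h) = 1}"
    by (intro closed_Collect_eq continuous_intros)
  moreover have "closed {l::real^('n::{finite,linorder}). l $ h \<ge> 0}" for h
    by (intro closed_Collect_le continuous_intros)
  ultimately show ?thesis by (metis closed_INT closed_Int)
qed

lemma Yset_closed: "closed (Yset :: ((real^'d::finite) \<times> (real^'n::{finite,linorder})) set)"
  unfolding Yset_def by (intro closed_Times closed_simplex_closed) auto

lemma bl_norm_simplex:
  assumes n2: "CARD('n::{finite,linorder}) \<ge> 2" and "(l :: real^('n::{finite,linorder})) \<in> closed_simplex"
  shows "bl_norm l \<le> 1"
proof -
  have "(\<Sum>h\<in>UNIV. \<bar>l $ h\<bar>) = (\<Sum>h\<in>UNIV. l $ h)" using assms(2) unfolding closed_simplex_def by simp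
  also have "\<dots> = 1" using assms(2) unfolding closed_simplex_def by simp
  finally show ?thesis using bl_norm_le_sum[OF n2, of l] by simp
qed



lemma fst_borel: "(fst :: ('a::topological_space \<times> 'b::topological_space) \<Rightarrow> 'a) \<in> borel_measurable borel"
  by (rule borel_measurable_continuous_onI) (rule continuous_on_fst[OF continuous_on_id, unfolded id_def])

lemma snd_borel: "(snd :: ('a::topological_space \<times> 'b::topological_space) \<Rightarrow> 'b) \<in> borel_measurable borel"
  by (rule borel_measurable_continuous_onI) (rule continuous_on_snd[OF continuous_on_id, unfolded id_def])

definition Inv :: "real \<Rightarrow> ('d::finite,'n::{finite,linorder}) ymeasure \<Rightarrow> bool" where
  "Inv a P \<longleftrightarrow> prob_space P \<and> sets P = sets borel \<and> (AE y in P. y \<in> Yset \<and> norm (fst y) \<le> a)"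

lemma Inv_mono: "Inv a P \<Longrightarrow> a \<le> b \<Longrightarrow> Inv b P"
  unfolding Inv_def by (auto elim: eventually_mono)

lemma Yset_iff: "y \<in> Yset \<longleftrightarrow> snd y \<in> closed_simplex"
  unfolding Yset_def by (cases y) auto

lemma ynorm_Yset:
  fixes y :: "(real^'d::finite) \<times> (real^('n::{finite,linorder}))"
  assumes n2: "CARD('n) \<ge> 2" and "y \<in> Yset"
  shows "0 \<le> ynorm y" "ynorm y \<le> norm (fst y) + 1"
  using bl_norm_nonneg[OF n2, of "snd y"] bl_norm_simplex[OF n2, of "snd y"] assms(2)
  unfolding ynorm_def Yset_iff by auto

lemma Inv_PK:
  fixes P :: "('d::finite,'n::{finite,linorder}) ymeasure"
  assumes n2: "CARD('n) \<ge> 2" and "Inv a P" and "a + 1 \<le> R"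
  shows "PK (BY R) P"
proof -
  have ae: "AE y in P. y \<in> Yset \<and> norm (fst y) \<le> a" using assms(2) unfolding Inv_def by auto
  have "AE y in P. y \<in> BY R" using ae
    by (rule eventually_mono) (use ynorm_Yset(2)[OF n2] assms(3) in \<open>force simp: BY_def\<close>)
  then show ?thesis using assms(2) unfolding Inv_def PK_def by auto
qed

lemma Inv_P1Y:
  fixes P :: "('d::finite,'n::{finite,linorder}) ymeasure"
  assumes n2: "CARD('n) \<ge> 2" and I: "Inv a P"
  shows "P1Y P" "0 \<le> m1 P" "m1 P \<le> a + 1"
proof -
  interpret prob_space P using I unfolding Inv_def by auto
  have sP: "sets P = sets borel" using I unfolding Inv_def by auto
  have meas: "ynorm \<in> borel_measurable P"
    using ynorm_measurable[OF n2] measurable_cong_sets[OF sP refl] by auto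
  have ae: "AE y in P. y \<in> Yset \<and> norm (fst y) \<le> a" using I unfolding Inv_def by auto
  have ae2: "AE y in P. 0 \<le> ynorm y \<and> ynorm y \<le> a + 1"
    using ae by (rule eventually_mono) (use ynorm_Yset[OF n2] in force)
  have int: "integrable P ynorm"
    by (rule integrable_const_bound[where B="a+1"]) (use ae2 meas in \<open>auto elim: eventually_mono\<close>)
  have "AE y in P. y \<in> Yset" using ae by (rule eventually_mono) auto
  then show "P1Y P" using int I unfolding P1Y_def PK_def Inv_def by auto
  show "0 \<le> m1 P" unfolding m1_def by (rule integral_nonneg_AE) (use ae2 in \<open>auto elim: eventually_mono\<close>)
  have "m1 P \<le> (\<integral>y. (a + 1) \<partial>P)" unfolding m1_def
    by (rule integral_mono_AE) (use ae2 int in \<open>auto elim: eventually_mono\<close>)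
  also have "\<dots> = a + 1" by (simp add: prob_space)
  finally show "m1 P \<le> a + 1" .
qed

lemma closed_Inv_set: "closed {y :: (real^'d::finite) \<times> (real^('n::{finite,linorder})). y \<in> Yset \<and> norm (fst y) \<le> a}"
proof -
  have "{y :: (real^'d::finite) \<times> (real^('n::{finite,linorder})). y \<in> Yset \<and> norm (fst y) \<le> a}
     = Yset \<inter> {y. norm (fst y) \<le> a}" by auto
  moreover have "closed {y :: (real^'d::finite) \<times> (real^('n::{finite,linorder})). norm (fst y) \<le> a}"
    by (intro closed_Collect_le continuous_intros)
  ultimately show ?thesis using Yset_closed by (metis closed_Int)
qed

lemma Inv_distr:
  fixes P :: "('d::finite,'n::{finite,linorder}) ymeasure"
    and f :: "(real^('d::finite)) \<times> (real^('n::{finite,linorder})) \<Rightarrow> (real^('d::finite)) \<times> (real^('n::{finite,linorder}))"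
  assumes I: "Inv a P" and f: "f \<in> borel_measurable borel"
    and fy: "\<And>y. y \<in> Yset \<Longrightarrow> norm (fst y) \<le> a \<Longrightarrow> f y \<in> Yset \<and> norm (fst (f y)) \<le> b"
  shows "Inv b (distr P borel f)"
proof -
  interpret prob_space P using I unfolding Inv_def by auto
  have sP: "sets P = sets borel" using I unfolding Inv_def by auto
  have fP: "f \<in> measurable P borel" using f measurable_cong_sets[OF sP refl] by auto
  have ae: "AE y in P. y \<in> Yset \<and> norm (fst y) \<le> a" using I unfolding Inv_def by auto
  have "AE y in distr P borel f. y \<in> Yset \<and> norm (fst y) \<le> b"
  proof (subst AE_distr_iff[OF fP])
    show "{x \<in> space borel. x \<in> (Yset :: ((real^'d) \<times> (real^('n::{finite,linorder}))) set) \<and> norm (fst x) \<le> b} \<in> sets borel"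
      apply (rule borel_closed) using closed_Inv_set[of b, where 'd='d and 'n='n] by simp
    show "AE x in P. f x \<in> Yset \<and> norm (fst (f x)) \<le> b"
      using ae by (rule eventually_mono) (use fy in auto)
  qed
  then show ?thesis unfolding Inv_def using prob_space_distr[OF fP] by auto
qed

lemma Inv_tilde:
  fixes P :: "('d::finite,'n::{finite,linorder}) ymeasure"
    and s :: "(real^('d::finite)) \<times> (real^('n::{finite,linorder})) \<Rightarrow> real^('n::{finite,linorder})"
  assumes I: "Inv a P" and s: "s \<in> borel_measurable borel" and sY: "\<And>y. y \<in> Yset \<Longrightarrow> s y \<in> closed_simplex"
  shows "Inv a (tilde_step s P)"
  unfolding tilde_step_def
proof (rule Inv_distr[OF I])
  show "(\<lambda>y. if y \<in> Yset then (fst y, s y) else y) \<in> borel_measurable borel"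
    by (rule measurable_If_set) (use s Yset_closed in \<open>auto intro!: borel_measurable_Pair borel_closed fst_borel\<close>)
  show "\<And>y. y \<in> Yset \<Longrightarrow> norm (fst y) \<le> a \<Longrightarrow>
         (if y \<in> Yset then (fst y, s y) else y) \<in> Yset \<and> norm (fst (if y \<in> Yset then (fst y, s y) else y)) \<le> a"
    using sY by (auto simp: Yset_iff)
qed



lemma norm_fst_le': "norm (fst w) \<le> norm (w :: 'a::real_normed_vector \<times> 'b::real_normed_vector)"
  using norm_fst_le[of "fst w" "snd w"] by simp

lemma norm_snd_le': "norm (snd w) \<le> norm (w :: 'a::real_normed_vector \<times> 'b::real_normed_vector)"
  using norm_snd_le[of "snd w" "fst w"] by simp

lemma ynorm_le_norm:
  fixes w :: "(real^('d::finite)) \<times> (real^('n::{finite,linorder}))"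
  assumes n2: "CARD('n) \<ge> 2"
  shows "0 \<le> ynorm w" "ynorm w \<le> (1 + real CARD('n)) * norm w"
proof -
  show "0 \<le> ynorm w" unfolding ynorm_def using bl_norm_nonneg[OF n2, of "snd w"] by simp
  have "bl_norm (snd w) \<le> real CARD('n) * norm (snd w)"
    using bl_norm_le_sum[OF n2, of "snd w"] sum_abs_le_norm[of "snd w"] by linarith
  also have "\<dots> \<le> real CARD('n) * norm w" by (intro mult_left_mono norm_snd_le') simp
  finally show "ynorm w \<le> (1 + real CARD('n)) * norm w"
    unfolding ynorm_def using norm_fst_le'[of w] by (simp add: algebra_simps)
qed

lemma v_cont:
  fixes v :: "('d::finite,'n::{finite,linorder}) ymeasure \<Rightarrow> (real^('d::finite)) \<times> (real^('n::{finite,linorder})) \<Rightarrow> real^('d::finite)"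
    and \<Psi> :: "('d::finite,'n::{finite,linorder}) ymeasure"
  assumes n2: "CARD('n) \<ge> 2"
    and v1: "\<forall>R \<Psi> y1 y2. PK (BY R) \<Psi> \<longrightarrow> y1 \<in> BY R \<longrightarrow> y2 \<in> BY R \<longrightarrow>
           norm (v \<Psi> y1 - v \<Psi> y2) \<le> L R * ynorm (y1 - y2)"
    and I: "Inv a \<Psi>"
  shows "continuous_on Yset (v \<Psi>)"
proof (rule continuous_on_iff[THEN iffD2], intro ballI allI impI)
  fix z :: "(real^('d::finite)) \<times> (real^('n::{finite,linorder}))" and e assume z: "z \<in> Yset" and e: "0 < (e::real)"
  define R where "R = max (a+1) (norm (fst z) + 2)"
  define C where "C = (\<bar>L R\<bar> + 1) * (1 + real CARD('n))"
  have C: "C > 0" unfolding C_def by (intro mult_pos_pos) auto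
  define d where "d = min 1 (e / C)"
  have PK: "PK (BY R) \<Psi>" by (rule Inv_PK[OF n2 I]) (simp add: R_def)
  show "\<exists>d>0. \<forall>x'\<in>Yset. dist x' z < d \<longrightarrow> dist (v \<Psi> x') (v \<Psi> z) < e"
  proof (intro exI[of _ d] conjI ballI impI)
    show "d > 0" unfolding d_def using e C by simp
    fix x' assume x': "x' \<in> Yset" and dx: "dist x' z < d"
    have "norm (fst x') \<le> norm (fst z) + norm (fst x' - fst z)" by (metis norm_triangle_sub)
    also have "norm (fst x' - fst z) \<le> norm (x' - z)" using norm_fst_le'[of "x' - z"] by simp
    finally have nf: "norm (fst x') \<le> norm (fst z) + dist x' z" by (simp add: dist_norm)
    have "dist x' z < 1" using dx unfolding d_def by simp
    then have xB: "x' \<in> BY R" using nf ynorm_Yset(2)[OF n2 x'] x' unfolding BY_def R_def by auto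
    have zB: "z \<in> BY R" using ynorm_Yset(2)[OF n2 z] z unfolding BY_def R_def by auto
    have "norm (v \<Psi> x' - v \<Psi> z) \<le> L R * ynorm (x' - z)" using v1 PK xB zB by blast
    also have "\<dots> \<le> (\<bar>L R\<bar> + 1) * ynorm (x' - z)"
      using ynorm_le_norm(1)[OF n2, of "x' - z"] by (intro mult_right_mono) auto
    also have "\<dots> \<le> (\<bar>L R\<bar> + 1) * ((1 + real CARD('n)) * norm (x' - z))"
      using ynorm_le_norm(2)[OF n2, of "x' - z"] by (intro mult_left_mono) auto
    also have "\<dots> = C * dist x' z" unfolding C_def by (simp add: dist_norm)
    also have "\<dots> < C * d" using dx C by simp
    also have "\<dots> \<le> e" unfolding d_def using C e
      by (metis min.cobounded2 mult.commute pos_le_divide_eq mult_left_mono less_imp_le)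
    finally show "dist (v \<Psi> x') (v \<Psi> z) < e" by (simp add: dist_norm)
  qed
qed

lemma Inv_flow:
  fixes v :: "('d::finite,'n::{finite,linorder}) ymeasure \<Rightarrow> (real^('d::finite)) \<times> (real^('n::{finite,linorder})) \<Rightarrow> real^('d::finite)"
    and P :: "('d::finite,'n::{finite,linorder}) ymeasure"
    and s :: "(real^('d::finite)) \<times> (real^('n::{finite,linorder})) \<Rightarrow> real^('n::{finite,linorder})"
  assumes n2: "CARD('n) \<ge> 2"
    and v1: "\<forall>R \<Psi> y1 y2. PK (BY R) \<Psi> \<longrightarrow> y1 \<in> BY R \<longrightarrow> y2 \<in> BY R \<longrightarrow>
           norm (v \<Psi> y1 - v \<Psi> y2) \<le> L R * ynorm (y1 - y2)"
    and vM: "\<forall>\<Psi> y. P1Y \<Psi> \<longrightarrow> y \<in> Yset \<longrightarrow> norm (v \<Psi> y) \<le> M * (1 + ynorm y + m1 \<Psi>)"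
    and M0: "0 \<le> M"
    and I: "Inv a P" and a0: "0 \<le> a"
    and s: "s \<in> borel_measurable borel" and sY: "\<And>y. y \<in> Yset \<Longrightarrow> s y \<in> closed_simplex"
    and tau: "0 < \<tau>" and r0: "0 \<le> r" and r1: "r \<le> \<tau>"
  shows "Inv (a + r * M * (3 + 2*a)) (flow_step v \<tau> s P r)"
proof -
  let ?T = "tilde_step s P"
  have IT: "Inv a ?T" by (rule Inv_tilde[OF I s sY])
  have cont: "continuous_on Yset (v ?T)" by (rule v_cont[OF n2 v1 IT])
  define h where "h z = (if z \<in> Yset then v ?T z else 0)" for z
  have hm: "h \<in> borel_measurable borel" unfolding h_def
    by (rule borel_measurable_continuous_on_if) (use cont Yset_closed in \<open>auto intro: borel_closed continuous_on_const\<close>)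
  define g where "g y = (fst y + r *\<^sub>R h (fst y, s y), snd y + (r/\<tau>) *\<^sub>R (s y - snd y))" for y
  have pm: "(\<lambda>y. (fst y, s y)) \<in> borel_measurable borel"
    by (intro borel_measurable_Pair fst_borel s)
  have hm2: "(\<lambda>y. h (fst y, s y)) \<in> borel_measurable borel"
    using measurable_compose[OF pm hm] by simp
  have gm: "g \<in> borel_measurable borel" unfolding g_def
    by (intro borel_measurable_Pair borel_measurable_add borel_measurable_scaleR borel_measurable_diff
        fst_borel snd_borel hm2 s borel_measurable_const)
  have eq: "(\<lambda>y. if y \<in> Yset then (fst y + r *\<^sub>R v ?T (fst y, s y), snd y + (r / \<tau>) *\<^sub>R (s y - snd y)) else y)
      = (\<lambda>y. if y \<in> Yset then g y else y)"
    by (auto simp: g_def h_def Yset_iff sY fun_eq_iff)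
  have fm: "(\<lambda>y. if y \<in> Yset then g y else y) \<in> borel_measurable borel"
    by (rule measurable_If_set[OF gm measurable_ident_sets[OF refl]]) (use Yset_closed in \<open>auto intro: borel_closed\<close>)
  have P1: "P1Y ?T" "0 \<le> m1 ?T" "m1 ?T \<le> a + 1" using Inv_P1Y[OF n2 IT] by auto
  show ?thesis
    unfolding flow_step_def eq
  proof (rule Inv_distr[OF I fm])
    fix y :: "(real^('d::finite)) \<times> (real^('n::{finite,linorder}))"
    assume y: "y \<in> Yset" and ny: "norm (fst y) \<le> a"
    let ?y' = "(fst y, s y)"
    have y'Y: "?y' \<in> Yset" using sY[OF y] by (simp add: Yset_iff)
    have yn: "0 \<le> ynorm ?y'" "ynorm ?y' \<le> a + 1"
      using ynorm_Yset[OF n2 y'Y] ny by auto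
    have "norm (v ?T ?y') \<le> M * (1 + ynorm ?y' + m1 ?T)" using vM P1(1) y'Y by blast
    also have "\<dots> \<le> M * (3 + 2 * a)" using yn P1 M0 by (intro mult_left_mono) auto
    finally have nv: "norm (v ?T ?y') \<le> M * (3 + 2 * a)" .
    have "norm (fst y + r *\<^sub>R v ?T ?y') \<le> norm (fst y) + r * norm (v ?T ?y')"
      using norm_triangle_ineq[of "fst y" "r *\<^sub>R v ?T ?y'"] r0 by simp
    also have "\<dots> \<le> a + r * (M * (3 + 2 * a))" using ny nv r0 by (intro add_mono mult_left_mono) auto
    finally have n1: "norm (fst y + r *\<^sub>R v ?T ?y') \<le> a + r * M * (3 + 2 * a)" by (simp add: mult.assoc)
    define c where "c = r / \<tau>"
    have c: "0 \<le> c" "c \<le> 1" unfolding c_def using r0 r1 tau by auto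
    have l: "snd y \<in> closed_simplex" using y by (simp add: Yset_iff)
    have sl: "s y \<in> closed_simplex" using sY[OF y] .
    have "snd y + c *\<^sub>R (s y - snd y) \<in> closed_simplex"
      unfolding closed_simplex_def
    proof (intro CollectI conjI allI)
      fix h
      have "0 \<le> snd y $ h" "0 \<le> s y $ h" using l sl unfolding closed_simplex_def by auto
      then have "0 \<le> (1 - c) * snd y $ h + c * s y $ h" using c by simp
      then show "0 \<le> (snd y + c *\<^sub>R (s y - snd y)) $ h" by (simp add: algebra_simps)
    next
      have "(\<Sum>h\<in>UNIV. (snd y + c *\<^sub>R (s y - snd y)) $ h)
          = (\<Sum>h\<in>UNIV. snd y $ h) + c * ((\<Sum>h\<in>UNIV. s y $ h) - (\<Sum>h\<in>UNIV. snd y $ h))"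
        by (simp add: sum.distrib sum_distrib_left sum_subtractf algebra_simps)
      then show "(\<Sum>h\<in>UNIV. (snd y + c *\<^sub>R (s y - snd y)) $ h) = 1"
        using l sl unfolding closed_simplex_def by simp
    qed
    then show "(if y \<in> Yset then g y else y) \<in> Yset \<and>
        norm (fst (if y \<in> Yset then g y else y)) \<le> a + r * M * (3 + 2 * a)"
      using y n1 y'Y by (simp add: Yset_iff c_def g_def h_def)
  qed
qed



lemma P1Y_m1_nonneg:
  fixes \<Psi> :: "('d::finite,'n::{finite,linorder}) ymeasure"
  assumes n2: "CARD('n) \<ge> 2" and "P1Y \<Psi>" shows "0 \<le> m1 \<Psi>"
proof -
  have "AE y in \<Psi>. y \<in> Yset" using assms(2) unfolding P1Y_def PK_def by auto
  then have "AE y in \<Psi>. 0 \<le> ynorm y" by (rule eventually_mono) (use ynorm_Yset(1)[OF n2] in auto)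
  then show ?thesis unfolding m1_def by (rule integral_nonneg_AE)
qed

lemma B_step:
  fixes a0 M t r :: real
  assumes "0 \<le> a0" "0 \<le> M" "0 \<le> r"
  defines "B \<equiv> \<lambda>t. (a0 + 3/2) * exp (2 * M * t) - 3/2"
  shows "B t + r * M * (3 + 2 * B t) \<le> B (t + r)"
proof -
  have "B t + r * M * (3 + 2 * B t) = (a0 + 3/2) * exp (2 * M * t) * (1 + 2 * M * r) - 3/2"
    unfolding B_def by (simp add: algebra_simps)
  also have "\<dots> \<le> (a0 + 3/2) * exp (2 * M * t) * exp (2 * M * r) - 3/2"
    using assms(1) by (intro diff_right_mono mult_left_mono) (auto simp: exp_ge_add_one_self)
  also have "\<dots> = B (t + r)" unfolding B_def by (simp add: algebra_simps exp_add[symmetric])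
  finally show ?thesis .
qed

theorem lemma5p7:
  fixes Q :: "real^'d::finite \<Rightarrow> ('d,'n::{finite,linorder}) ymeasure \<Rightarrow> real^('n::{finite,linorder})^('n::{finite,linorder})"
    and v :: "('d::finite,'n::{finite,linorder}) ymeasure \<Rightarrow> (real^('d::finite)) \<times> (real^('n::{finite,linorder})) \<Rightarrow> real^('d::finite)"
    and \<tau> :: "nat \<Rightarrow> real"
    and \<Psi>0 :: "('d::finite,'n::{finite,linorder}) ymeasure"
    and sel :: "nat \<Rightarrow> nat \<Rightarrow> (real^('d::finite)) \<times> (real^('n::{finite,linorder})) \<Rightarrow> real^('n::{finite,linorder})"
  assumes n2: "CARD('n) \<ge> 2"
    and Q: "Q_assms Q"
    and v: "v_assms v"
    and tau_pos: "\<And>k. \<tau> k > 0"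
    and tau_lim: "\<tau> \<longlonglongrightarrow> 0"
    and init: "PcY \<Psi>0"
    and scheme: "\<And>k. scheme_selection Q v (\<tau> k) \<Psi>0 (sel k)"
  shows "\<exists>R :: real \<Rightarrow> real. mono_on {0..} R \<and> continuous_on {0..} R \<and> (\<forall>T\<ge>0. R T \<ge> 0) \<and>
    (\<forall>T\<ge>0. \<forall>k. \<forall>t\<in>{0..T}.
        PK (BY (R T)) (curve v (\<tau> k) (sel k) \<Psi>0 t) \<and>
        PK (BY (R T)) (curve_under v (\<tau> k) (sel k) \<Psi>0 t) \<and>
        PK (BY (R T)) (curve_tilde v (\<tau> k) (sel k) \<Psi>0 t))"
proof -
  obtain K where K: "compact K" "K \<subseteq> Yset" "PK K \<Psi>0" using init unfolding PcY_def by blast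
  obtain b where b: "\<And>y. y \<in> K \<Longrightarrow> norm y \<le> b"
    using compact_imp_bounded[OF K(1)] unfolding bounded_iff by blast
  define a0 where "a0 = max 0 b"
  have a0: "0 \<le> a0" unfolding a0_def by simp
  have I0: "Inv a0 \<Psi>0"
  proof -
    have "AE y in \<Psi>0. y \<in> K" using K(3) unfolding PK_def by auto
    moreover have "x \<in> Yset \<and> norm (fst x) \<le> a0" if "x \<in> K" for x
      using K(2) b[OF that] norm_fst_le'[of x] that unfolding a0_def by auto
    ultimately have "AE y in \<Psi>0. y \<in> Yset \<and> norm (fst y) \<le> a0"
      by (auto elim: eventually_mono)
    then show ?thesis using K(3) unfolding PK_def Inv_def by auto
  qed
  obtain L M0 where v1: "\<forall>R \<Psi> y1 y2. PK (BY R) \<Psi> \<longrightarrow> y1 \<in> BY R \<longrightarrow> y2 \<in> BY R \<longrightarrow>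
           norm (v \<Psi> y1 - v \<Psi> y2) \<le> L R * ynorm (y1 - y2)"
    and v3: "\<forall>\<Psi> y. P1Y \<Psi> \<longrightarrow> y \<in> Yset \<longrightarrow> norm (v \<Psi> y) \<le> M0 * (1 + ynorm y + m1 \<Psi>)"
    using v unfolding v_assms_def by blast
  define M where "M = max M0 0"
  have M0: "0 \<le> M" unfolding M_def by simp
  have vM: "\<forall>\<Psi> y. P1Y \<Psi> \<longrightarrow> y \<in> Yset \<longrightarrow> norm (v \<Psi> y) \<le> M * (1 + ynorm y + m1 \<Psi>)"
  proof (intro allI impI)
    fix \<Psi> :: "('d::finite,'n::{finite,linorder}) ymeasure" and y :: "(real^('d::finite)) \<times> (real^('n::{finite,linorder}))"
    assume P: "P1Y \<Psi>" and y: "y \<in> Yset"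
    have X: "0 \<le> 1 + ynorm y + m1 \<Psi>"
      using ynorm_Yset(1)[OF n2 y] P1Y_m1_nonneg[OF n2 P] by simp
    have "norm (v \<Psi> y) \<le> M0 * (1 + ynorm y + m1 \<Psi>)" using v3 P y by blast
    also have "\<dots> \<le> M * (1 + ynorm y + m1 \<Psi>)" unfolding M_def using X by (intro mult_right_mono) auto
    finally show "norm (v \<Psi> y) \<le> M * (1 + ynorm y + m1 \<Psi>)" .
  qed
  define B where "B = (\<lambda>t::real. (a0 + 3/2) * exp (2 * M * t) - 3/2)"
  have Bmono: "B t1 \<le> B t2" if "t1 \<le> t2" for t1 t2
    unfolding B_def using that a0 M0 by (auto intro!: mult_left_mono mult_right_mono)
  have B0: "B 0 = a0" unfolding B_def by simp
  have Bge: "a0 \<le> B t" if "0 \<le> t" for t using Bmono[OF that] B0 by simp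
  have Bstep: "B t + r * M * (3 + 2 * B t) \<le> B (t + r)" if "0 \<le> r" for t r
    using B_step[OF a0 M0 that, of t] unfolding B_def by simp
  have sel: "sel k i \<in> borel_measurable borel" "\<And>y. y \<in> Yset \<Longrightarrow> sel k i y \<in> closed_simplex" for k i
  proof -
    have sc: "scheme_selection Q v (\<tau> k) \<Psi>0 (sel k)" by (rule scheme)
    show "sel k i \<in> borel_measurable borel" using sc unfolding scheme_selection_def by blast
    fix y :: "(real^('d::finite)) \<times> (real^('n::{finite,linorder}))" assume "y \<in> Yset"
    then show "sel k i y \<in> closed_simplex" using sc unfolding scheme_selection_def
      by (cases y) blast
  qed
  have flow: "Inv (B (t + r)) (flow_step v (\<tau> k) (sel k i) P r)"
    if "Inv (B t) P" "0 \<le> t" "0 \<le> r" "r \<le> \<tau> k" for t r k i and P :: "('d::finite,'n::{finite,linorder}) ymeasure"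
  proof -
    have "Inv (B t + r * M * (3 + 2 * B t)) (flow_step v (\<tau> k) (sel k i) P r)"
      by (rule Inv_flow[OF n2 v1 vM M0 that(1) order_trans[OF a0 Bge[OF that(2)]] sel tau_pos that(3,4)])
    then show ?thesis by (rule Inv_mono) (rule Bstep[OF that(3)])
  qed
  have node: "Inv (B (real i * \<tau> k)) (node v (\<tau> k) (sel k) \<Psi>0 i)" for k i
  proof (induction i)
    case 0 then show ?case using I0 B0 by simp
  next
    case (Suc i)
    have "Inv (B (real i * \<tau> k + \<tau> k)) (flow_step v (\<tau> k) (sel k i) (node v (\<tau> k) (sel k) \<Psi>0 i) (\<tau> k))"
      by (rule flow[OF Suc]) (use tau_pos[of k] in \<open>auto intro: less_imp_le\<close>)
    then show ?case by (simp add: algebra_simps)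
  qed
  define R where "R = (\<lambda>T. B T + 1)"
  show ?thesis
  proof (intro exI[of _ R] conjI allI impI ballI)
    show "mono_on {0..} R" unfolding R_def by (intro mono_onI) (simp add: Bmono)
    show "continuous_on {0..} R" unfolding R_def B_def by (intro continuous_intros)
    fix T :: real assume T: "0 \<le> T"
    show "0 \<le> R T" unfolding R_def using Bge[OF T] a0 by simp
    fix k t assume t: "t \<in> {0..T}"
    have tau: "\<tau> k > 0" by (rule tau_pos)
    have PKI: "PK (BY (R T)) P" if "Inv (B s) P" "s \<le> T" for s and P :: "('d::finite,'n::{finite,linorder}) ymeasure"
      by (rule Inv_PK[OF n2 Inv_mono[OF that(1) Bmono[OF that(2)]]]) (simp add: R_def)
    define i where "i = nat \<lfloor>t / \<tau> k\<rfloor>"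
    have q0: "0 \<le> t / \<tau> k" using t tau by simp
    have ri: "real i = real_of_int \<lfloor>t / \<tau> k\<rfloor>" unfolding i_def using q0 by simp
    have i1: "real i * \<tau> k \<le> t"
      using ri tau by (metis floor_le_iff le_divide_eq of_int_floor_le order_refl pos_le_divide_eq)
    have i2: "t - real i * \<tau> k < \<tau> k"
    proof -
      have "t / \<tau> k < real i + 1" using ri by linarith
      then have "t < (real i + 1) * \<tau> k" using tau by (simp add: divide_less_eq)
      then show ?thesis by (simp add: algebra_simps)
    qed
    have Ii: "Inv (B (real i * \<tau> k)) (node v (\<tau> k) (sel k) \<Psi>0 i)" by (rule node)
    have ti0: "0 \<le> real i * \<tau> k" using tau by simp
    have "Inv (B (real i * \<tau> k + (t - real i * \<tau> k))) (flow_step v (\<tau> k) (sel k i) (node v (\<tau> k) (sel k) \<Psi>0 i) (t - real i * \<tau> k))"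
      by (rule flow[OF Ii ti0]) (use i1 i2 in auto)
    then have "PK (BY (R T)) (flow_step v (\<tau> k) (sel k i) (node v (\<tau> k) (sel k) \<Psi>0 i) (t - real i * \<tau> k))"
      by (rule PKI) (use t in auto)
    then show "PK (BY (R T)) (curve v (\<tau> k) (sel k) \<Psi>0 t)" unfolding curve_def Let_def i_def .
    have "PK (BY (R T)) (node v (\<tau> k) (sel k) \<Psi>0 i)" by (rule PKI[OF Ii]) (use i1 t in auto)
    then show "PK (BY (R T)) (curve_under v (\<tau> k) (sel k) \<Psi>0 t)" unfolding curve_under_def i_def .
    define j where "j = nat (\<lceil>t / \<tau> k\<rceil> - 1)"
    have "real j \<le> t / \<tau> k"
    proof (cases "\<lceil>t / \<tau> k\<rceil> - 1 \<le> 0")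
      case True then show ?thesis unfolding j_def using q0 by simp
    next
      case False
      then have "real j = real_of_int (\<lceil>t / \<tau> k\<rceil> - 1)" unfolding j_def by simp
      moreover have "real_of_int (\<lceil>t / \<tau> k\<rceil> - 1) < t / \<tau> k" by (simp add: ceiling_correct)
      ultimately show ?thesis by simp
    qed
    then have j1: "real j * \<tau> k \<le> t" using tau by (simp add: le_divide_eq)
    have "Inv (B (real j * \<tau> k)) (tilde_step (sel k j) (node v (\<tau> k) (sel k) \<Psi>0 j))"
      by (rule Inv_tilde[OF node sel])
    then have "PK (BY (R T)) (tilde_step (sel k j) (node v (\<tau> k) (sel k) \<Psi>0 j))"
      by (rule PKI) (use j1 t in auto)
    then show "PK (BY (R T)) (curve_tilde v (\<tau> k) (sel k) \<Psi>0 t)" unfolding curve_tilde_def Let_def j_def .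
  qed
qed

end
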